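(* The graph $K_{15}-6K_2$ has a triangular embedding in an orientable surface; in particular its orientable genus equals $10$.
   Context: $K_{15}-6K_2$ is the complete graph on 15 vertices with the 6 edges of a matching removed. An embedding is triangular if it is cellular and every face is bounded by a closed walk of length 3. *)

theory Defs
  imports "HOL-Combinatorics.Permutations"
begin

text \<open>Orientable cellular embeddings of a connected graph are represented combinatorially by
  rotation systems (Heffter--Edmonds--Youngs): at every vertex a cyclic permutation of
  its neighbours.  The faces of the embedding are the orbits of the face-tracing
  permutation on darts (directed edges).\<close>

definition simple_graph :: "'a set \<Rightarrow> ('a \<Rightarrow> 'a \<Rightarrow> bool) \<Rightarrow> bool" where
  "simple_graph V E \<longleftrightarrow> finite V \<and> (\<forall>u v. E u v \<longrightarrow> u \<in> V \<and> v \<in> V \<and> u \<noteq> v \<and> E v u)"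

definition neighbours :: "'a set \<Rightarrow> ('a \<Rightarrow> 'a \<Rightarrow> bool) \<Rightarrow> 'a \<Rightarrow> 'a set" where
  "neighbours V E v = {u \<in> V. E v u}"

definition darts :: "'a set \<Rightarrow> ('a \<Rightarrow> 'a \<Rightarrow> bool) \<Rightarrow> ('a \<times> 'a) set" where
  "darts V E = {(u, v). u \<in> V \<and> v \<in> V \<and> E u v}"

definition num_edges :: "'a set \<Rightarrow> ('a \<Rightarrow> 'a \<Rightarrow> bool) \<Rightarrow> nat" where
  "num_edges V E = card {{u, v} | u v. u \<in> V \<and> v \<in> V \<and> E u v}"

definition rotation_system :: "'a set \<Rightarrow> ('a \<Rightarrow> 'a \<Rightarrow> bool) \<Rightarrow> ('a \<Rightarrow> 'a \<Rightarrow> 'a) \<Rightarrow> bool" where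
  "rotation_system V E rot \<longleftrightarrow>
     (\<forall>v\<in>V. rot v permutes neighbours V E v \<and>
        (\<forall>u\<in>neighbours V E v. \<forall>w\<in>neighbours V E v. \<exists>k::nat. (rot v ^^ k) u = w))"

definition face_succ :: "('a \<Rightarrow> 'a \<Rightarrow> 'a) \<Rightarrow> 'a \<times> 'a \<Rightarrow> 'a \<times> 'a" where
  "face_succ rot d = (snd d, rot (snd d) (fst d))"

definition face_of :: "('a \<Rightarrow> 'a \<Rightarrow> 'a) \<Rightarrow> 'a \<times> 'a \<Rightarrow> ('a \<times> 'a) set" where
  "face_of rot d = {(face_succ rot ^^ k) d | k. True}"

definition faces :: "'a set \<Rightarrow> ('a \<Rightarrow> 'a \<Rightarrow> bool) \<Rightarrow> ('a \<Rightarrow> 'a \<Rightarrow> 'a) \<Rightarrow> ('a \<times> 'a) set set" where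
  "faces V E rot = face_of rot ` darts V E"

text \<open>Genus of the orientable surface of the embedding given by a rotation system
  (Euler: V - E + F = 2 - 2g).\<close>
definition embedding_genus :: "'a set \<Rightarrow> ('a \<Rightarrow> 'a \<Rightarrow> bool) \<Rightarrow> ('a \<Rightarrow> 'a \<Rightarrow> 'a) \<Rightarrow> int" where
  "embedding_genus V E rot =
     (2 - int (card V) + int (num_edges V E) - int (card (faces V E rot))) div 2"

definition triangular :: "'a set \<Rightarrow> ('a \<Rightarrow> 'a \<Rightarrow> bool) \<Rightarrow> ('a \<Rightarrow> 'a \<Rightarrow> 'a) \<Rightarrow> bool" where
  "triangular V E rot \<longleftrightarrow> (\<forall>F\<in>faces V E rot. card F = 3)"

definition orientable_genus :: "'a set \<Rightarrow> ('a \<Rightarrow> 'a \<Rightarrow> bool) \<Rightarrow> nat" where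
  "orientable_genus V E =
     (LEAST g::nat. \<exists>rot. rotation_system V E rot \<and> embedding_genus V E rot = int g)"

text \<open>K_15 minus a perfect-ish matching of 6 edges {0,1},{2,3},...,{10,11}.\<close>
definition K15_V :: "nat set" where
  "K15_V = {0..<15}"

definition K15_minus_6K2 :: "nat \<Rightarrow> nat \<Rightarrow> bool" where
  "K15_minus_6K2 u v \<longleftrightarrow> u < 15 \<and> v < 15 \<and> u \<noteq> v \<and>
      \<not> (u < 12 \<and> v < 12 \<and> u div 2 = v div 2)"

end

theory Submission
  imports Defs "HOL-Combinatorics.Permutations"
begin


lemma orbit_return:
  assumes fin: "finite D" and img: "\<And>x. x \<in> D \<Longrightarrow> f x \<in> D" and inj: "inj_on f D" and d: "d \<in> D"
  obtains n where "n > 0" "(f ^^ n) d = d"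
proof -
  define g where "g x = (if x \<in> D then f x else x)" for x
  have ginj: "inj g"
    unfolding inj_def g_def using img inj by (auto simp: inj_on_def) 
  have fg: "(f ^^ k) x = (g ^^ k) x \<and> (f ^^ k) x \<in> D" if "x \<in> D" for k x
    using that by (induction k) (auto simp: g_def img)
  have "{y. \<exists>n. y = (g ^^ n) d} \<subseteq> D" using fg d by (auto) (metis)
  hence "finite {y. \<exists>n. y = (g ^^ n) d}" using fin finite_subset by blast
  then obtain n where "n > 0" "(g ^^ n) d = d" using funpow_inj_finite[OF ginj] by blast
  thus thesis using that fg d by metis
qed

lemma orbit_in:
  assumes img: "\<And>x. x \<in> D \<Longrightarrow> f x \<in> D" and "x \<in> D" shows "(f ^^ k) x \<in> D"
  using assms by (induction k) auto

lemma orbit_same: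
  assumes fin: "finite D" and img: "\<And>x. x \<in> D \<Longrightarrow> f x \<in> D" and inj: "inj_on f D" and d: "d \<in> D"
    and e: "e \<in> {(f ^^ k) d | k. True}"
  shows "{(f ^^ k) e | k. True} = {(f ^^ k) d | k. True}"
proof -
  obtain k where ek: "e = (f ^^ k) d" using e by auto
  obtain n where n: "n > 0" "(f ^^ n) d = d" using orbit_return[OF fin img inj d] by blast
  have nk: "(f ^^ (n*k)) d = d"
  proof (induction k)
    case (Suc k) thus ?case using n by (simp add: funpow_add[unfolded o_def] mult.commute[of n] )
  qed simp
  have "d = (f ^^ (n*k - k)) e"
  proof -
    have "n*k - k + k = n*k" using n by (simp add: mult_le_mono1)
    hence "(f ^^ (n*k - k)) e = (f ^^ (n*k)) d" unfolding ek by (metis funpow_add o_apply)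
    thus ?thesis using nk by simp
  qed
  show ?thesis
  proof
    show "{(f ^^ k) e | k. True} \<subseteq> {(f ^^ k) d | k. True}"
      using ek by (auto simp: funpow_add[symmetric, unfolded o_def] simp del: funpow_add) (metis funpow_add o_apply)
    show "{(f ^^ k) d | k. True} \<subseteq> {(f ^^ k) e | k. True}"
      using \<open>d = _\<close> by (auto) (metis funpow_add o_apply)
  qed
qed



lemma darts_finite: "simple_graph V E \<Longrightarrow> finite (darts V E)"
  unfolding simple_graph_def darts_def
  by (rule finite_subset[of _ "V \<times> V"]) auto

lemma fs_in:
  assumes G: "simple_graph V E" and R: "rotation_system V E rot" and d: "d \<in> darts V E"
  shows "face_succ rot d \<in> darts V E"
proof -
  obtain u v where uv: "d = (u,v)" "u \<in> V" "v \<in> V" "E u v" using d by (auto simp: darts_def)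
  have "E v u" using G uv by (auto simp: simple_graph_def)
  hence un: "u \<in> neighbours V E v" using uv by (auto simp: neighbours_def)
  have "rot v permutes neighbours V E v" using R uv by (auto simp: rotation_system_def)
  hence "rot v u \<in> neighbours V E v" using un by (simp add: permutes_in_image)
  thus ?thesis using uv by (auto simp: face_succ_def darts_def neighbours_def)
qed

lemma fs_inj:
  assumes G: "simple_graph V E" and R: "rotation_system V E rot"
  shows "inj_on (face_succ rot) (darts V E)"
proof (rule inj_onI)
  fix x y assume x: "x \<in> darts V E" and y: "y \<in> darts V E" and eq: "face_succ rot x = face_succ rot y"
  obtain u v where x': "x = (u,v)" "v \<in> V" using x by (auto simp: darts_def)
  obtain u' v' where y': "y = (u',v')" using y by (auto simp: darts_def)
  have vv: "v' = v" and r: "rot v u = rot v u'" using eq x' y' by (auto simp: face_succ_def)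
  have "rot v permutes neighbours V E v" using R x' by (auto simp: rotation_system_def)
  hence "inj (rot v)" by (rule permutes_inj)
  hence "u = u'" using r by (auto dest: injD)
  thus "x = y" using x' y' vv by simp
qed

lemma faces_sum:
  assumes G: "simple_graph V E" and R: "rotation_system V E rot"
  shows "(\<Sum>F\<in>faces V E rot. card F) = card (darts V E)"
proof -
  let ?D = "darts V E" and ?f = "face_succ rot"
  have fin: "finite ?D" using darts_finite[OF G] .
  have img: "\<And>x. x \<in> ?D \<Longrightarrow> ?f x \<in> ?D" using fs_in[OF G R] .
  have inj: "inj_on ?f ?D" using fs_inj[OF G R] .
  have sub: "face_of rot d \<subseteq> ?D" if "d \<in> ?D" for d
    using orbit_in[of ?D ?f, OF img that] by (auto simp: face_of_def)
  have U: "\<Union>(faces V E rot) = ?D"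
  proof
    show "\<Union>(faces V E rot) \<subseteq> ?D" using sub by (auto simp: faces_def)
    show "?D \<subseteq> \<Union>(faces V E rot)"
    proof
      fix d assume "d \<in> ?D"
      moreover have "d \<in> face_of rot d" unfolding face_of_def by (auto intro: exI[of _ 0])
      ultimately show "d \<in> \<Union>(faces V E rot)" by (auto simp: faces_def)
    qed
  qed
  have P: "pairwise disjnt (faces V E rot)"
  proof (rule pairwiseI)
    fix A B assume A: "A \<in> faces V E rot" and B: "B \<in> faces V E rot" and ne: "A \<noteq> B"
    obtain a where a: "a \<in> ?D" "A = face_of rot a" using A by (auto simp: faces_def)
    obtain b where b: "b \<in> ?D" "B = face_of rot b" using B by (auto simp: faces_def)
    show "disjnt A B"
    proof (rule ccontr)
      assume "\<not> disjnt A B"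
      then obtain e where e: "e \<in> A" "e \<in> B" by (auto simp: disjnt_def)
      have "face_of rot e = A" using orbit_same[OF fin img inj a(1)] e a by (simp add: face_of_def)
      moreover have "face_of rot e = B" using orbit_same[OF fin img inj b(1)] e b by (simp add: face_of_def)
      ultimately show False using ne by simp
    qed
  qed
  have "card (\<Union>(faces V E rot)) = (\<Sum>F\<in>faces V E rot. card F)"
  proof (rule card_Union_disjoint[OF P])
    fix A assume "A \<in> faces V E rot"
    then obtain d where "d \<in> ?D" "A = face_of rot d" by (auto simp: faces_def)
    thus "finite A" using sub fin finite_subset by metis
  qed
  thus ?thesis using U by simp
qed

lemma face_ge3:
  assumes G: "simple_graph V E" and R: "rotation_system V E rot"
    and deg: "\<And>v u. v \<in> V \<Longrightarrow> \<exists>w. E v w \<and> w \<noteq> u"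
    and d: "d \<in> darts V E"
  shows "3 \<le> card (face_of rot d)"
proof -
  let ?f = "face_succ rot"
  obtain u v where uv: "d = (u,v)" "u \<in> V" "v \<in> V" "E u v" using d by (auto simp: darts_def)
  have "E v u" using G uv by (auto simp: simple_graph_def)
  hence un: "u \<in> neighbours V E v" using uv by (auto simp: neighbours_def)
  have fin: "finite (face_of rot d)"
    using darts_finite[OF G] orbit_in[of "darts V E" ?f, OF fs_in[OF G R] d]
    by (auto simp: face_of_def intro: finite_subset)
  have d1: "?f d \<in> darts V E" using fs_in[OF G R d] .
  have neq: "fst x \<noteq> snd x" if "x \<in> darts V E" for x using that G by (auto simp: darts_def simple_graph_def)
  have a: "d \<noteq> ?f d" using neq[OF d] uv by (auto simp: face_succ_def)
  have b: "?f d \<noteq> ?f (?f d)" using neq[OF d1] by (cases "?f d") (auto simp: face_succ_def)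
  have c: "d \<noteq> ?f (?f d)"
  proof
    assume "d = ?f (?f d)"
    hence fx: "rot v u = u" using uv by (simp add: face_succ_def)
    obtain w where w: "E v w" "w \<noteq> u" using deg[OF uv(3)] by blast
    have wn: "w \<in> neighbours V E v" using w G by (auto simp: neighbours_def simple_graph_def)
    have "\<forall>u\<in>neighbours V E v. \<forall>w\<in>neighbours V E v. \<exists>k::nat. (rot v ^^ k) u = w"
      using R uv by (auto simp: rotation_system_def)
    then obtain k where "(rot v ^^ k) u = w" using un wn by blast
    moreover have "(rot v ^^ k) u = u" for k by (induction k) (simp_all add: fx)
    ultimately show False using w by simp
  qed
  have "{d, ?f d, ?f (?f d)} \<subseteq> face_of rot d"
    unfolding face_of_def
    by (auto intro: exI[of _ 0] exI[of _ 1] exI[of _ 2] simp: numeral_2_eq_2)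
  hence "card {d, ?f d, ?f (?f d)} \<le> card (face_of rot d)" using fin by (rule card_mono[rotated])
  thus ?thesis using a b c by simp
qed

lemma faces_bound:
  assumes G: "simple_graph V E" and R: "rotation_system V E rot"
    and deg: "\<And>v u. v \<in> V \<Longrightarrow> \<exists>w. E v w \<and> w \<noteq> u"
  shows "3 * card (faces V E rot) \<le> card (darts V E)"
proof -
  have "3 * card (faces V E rot) = (\<Sum>F\<in>faces V E rot. 3)" by simp
  also have "\<dots> \<le> (\<Sum>F\<in>faces V E rot. card F)"
    by (rule sum_mono) (use face_ge3[OF G R deg] in \<open>auto simp: faces_def\<close>)
  finally show ?thesis using faces_sum[OF G R] by simp
qed

lemma faces_tri:
  assumes G: "simple_graph V E" and R: "rotation_system V E rot"
    and deg: "\<And>v u. v \<in> V \<Longrightarrow> \<exists>w. E v w \<and> w \<noteq> u"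
    and t: "\<And>d. d \<in> darts V E \<Longrightarrow> (face_succ rot ^^ 3) d = d"
  shows "triangular V E rot" "3 * card (faces V E rot) = card (darts V E)"
proof -
  have le: "card (face_of rot d) \<le> 3" if d: "d \<in> darts V E" for d
  proof -
    let ?f = "face_succ rot"
    have "face_of rot d \<subseteq> {d, ?f d, ?f (?f d)}"
    proof
      fix x assume "x \<in> face_of rot d"
      then obtain k where "x = (?f ^^ k) d" by (auto simp: face_of_def)
      hence "x = (?f ^^ (k mod 3)) d" using funpow_mod_eq[where f="?f" and n=3 and x=d and m=k] t[OF d] by simp
      moreover have "k mod 3 = 0 \<or> k mod 3 = 1 \<or> k mod 3 = 2" by arith
      ultimately show "x \<in> {d, ?f d, ?f (?f d)}"
        by (auto simp: numeral_2_eq_2)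
    qed
    hence "card (face_of rot d) \<le> card {d, ?f d, ?f (?f d)}" by (rule card_mono[rotated]) simp
    also have "\<dots> \<le> 3" by (simp add: card_insert_le_m1)
    finally show ?thesis .
  qed
  have eq: "card F = 3" if "F \<in> faces V E rot" for F
    using that le face_ge3[OF G R deg] by (auto simp: faces_def intro: antisym)
  thus "triangular V E rot" by (simp add: triangular_def)
  have "(\<Sum>F\<in>faces V E rot. card F) = (\<Sum>F\<in>faces V E rot. 3)" by (rule sum.cong) (auto simp: eq)
  thus "3 * card (faces V E rot) = card (darts V E)" using faces_sum[OF G R] by simp
qed



fun nx :: "nat \<Rightarrow> nat list \<Rightarrow> nat \<Rightarrow> nat" where
  "nx a (x # y # r) z = (if z = x then y else nx a (y # r) z)"
| "nx a [x] z = (if z = x then a else z)"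
| "nx a [] z = z"

lemma nx_out: "z \<notin> set xs \<Longrightarrow> nx a xs z = z"
  by (induction a xs z rule: nx.induct) auto

definition Lr :: "nat \<Rightarrow> nat list" where
  "Lr v = (if v < 15 then [[2, 13, 8, 10, 4, 14, 6, 3, 11, 9, 7, 12, 5], [2, 9, 14, 4, 8, 12, 7, 10, 3, 5, 13, 11, 6], [0, 5, 7, 8, 4, 9, 1, 6, 12, 11, 14, 10, 13], [0, 6, 5, 1, 10, 9, 12, 8, 13, 14, 7, 4, 11], [0, 10, 12, 13, 6, 11, 3, 7, 9, 2, 8, 1, 14], [0, 12, 10, 14, 9, 13, 1, 3, 6, 8, 11, 7, 2], [0, 14, 12, 2, 1, 11, 4, 13, 9, 10, 8, 5, 3], [0, 9, 4, 3, 14, 8, 2, 5, 11, 13, 10, 1, 12], [0, 13, 3, 12, 1, 4, 2, 7, 14, 11, 5, 6, 10], [0, 11, 12, 3, 10, 6, 13, 5, 14, 1, 2, 4, 7], [0, 8, 6, 9, 3, 1, 7, 13, 2, 14, 5, 12, 4], [0, 3, 4, 6, 1, 13, 7, 5, 8, 14, 2, 12, 9], [0, 7, 1, 8, 3, 9, 11, 2, 6, 14, 13, 4, 10, 5], [0, 2, 10, 7, 11, 1, 5, 9, 6, 4, 12, 14, 3, 8], [0, 4, 1, 9, 5, 10, 2, 11, 8, 7, 3, 13, 12, 6]] ! v else [])"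

definition rot0 :: "nat \<Rightarrow> nat \<Rightarrow> nat" where
  "rot0 v = nx (hd (Lr v)) (Lr v)"

lemma C1: "list_all (\<lambda>v. distinct (Lr v) \<and> Lr v \<noteq> [] \<and> set (Lr v) = set (filter (K15_minus_6K2 v) [0..<15])
   \<and> list_all (\<lambda>i. rot0 v (Lr v ! i) = Lr v ! (Suc i mod length (Lr v))) [0..<length (Lr v)]) [0..<15]"
  by code_simp

lemma C2: "list_all (\<lambda>v. list_all (\<lambda>i. rot0 (Lr v ! (Suc i mod length (Lr v))) v = Lr v ! i
    \<and> rot0 (Lr v ! i) (Lr v ! (Suc i mod length (Lr v))) = v) [0..<length (Lr v)]) [0..<15]"
  by code_simp

lemma C3: "(\<Sum>u\<leftarrow>[0..<15]. length (Lr u)) = 198 \<and> (\<Sum>u\<leftarrow>[0..<15]. length (filter (\<lambda>v. u < v) (Lr u))) = 99"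
  by code_simp



lemma cyc_list:
  assumes dist: "distinct xs" and ne: "xs \<noteq> []"
    and step: "\<And>i. i < length xs \<Longrightarrow> f (xs!i) = xs!(Suc i mod length xs)"
    and out: "\<And>x. x \<notin> set xs \<Longrightarrow> f x = x"
  shows "f permutes set xs" "\<forall>u\<in>set xs. \<forall>w\<in>set xs. \<exists>k::nat. (f^^k) u = w"
proof -
  let ?n = "length xs"
  have n: "?n > 0" using ne by simp
  have it: "(f^^k)(xs!i) = xs!((i+k) mod ?n)" if "i < ?n" for i k
  proof (induction k)
    case 0 thus ?case using that by simp
  next
    case (Suc k)
    have "(f^^Suc k)(xs!i) = f (xs!((i+k) mod ?n))" using Suc by simp
    also have "\<dots> = xs!(Suc ((i+k) mod ?n) mod ?n)" using step n by simp
    also have "Suc ((i+k) mod ?n) mod ?n = (i + Suc k) mod ?n" by (simp add: mod_Suc_eq)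
    finally show ?case .
  qed
  show "\<forall>u\<in>set xs. \<forall>w\<in>set xs. \<exists>k::nat. (f^^k) u = w"
  proof (intro ballI)
    fix u w assume "u \<in> set xs" "w \<in> set xs"
    then obtain i j where ij: "i < ?n" "u = xs!i" "j < ?n" "w = xs!j" by (auto simp: in_set_conv_nth)
    have "(i + (j + ?n - i)) mod ?n = j" using ij by simp
    thus "\<exists>k::nat. (f^^k) u = w" using it[OF ij(1), of "j + ?n - i"] ij by metis
  qed
  have img: "f ` set xs = set xs"
  proof
    show "f ` set xs \<subseteq> set xs" using step n by (auto simp: in_set_conv_nth) (metis mod_less_divisor n)
    show "set xs \<subseteq> f ` set xs"
    proof
      fix w assume "w \<in> set xs"
      then obtain j where j: "j < ?n" "w = xs!j" by (auto simp: in_set_conv_nth)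
      let ?i = "(j + ?n - 1) mod ?n"
      have i: "?i < ?n" using n by simp
      have "Suc ?i mod ?n = Suc (j + ?n - 1) mod ?n" by (simp add: mod_Suc_eq)
      also have "Suc (j + ?n - 1) = j + ?n" using n by simp
      finally have "Suc ?i mod ?n = j" using j by simp
      hence "f (xs!?i) = w" using step[OF i] j by simp
      thus "w \<in> f ` set xs" using i by (metis image_eqI nth_mem)
    qed
  qed
  have "inj_on f (set xs)" by (rule eq_card_imp_inj_on) (simp_all add: img)
  hence "bij_betw f (set xs) (set xs)" using img by (simp add: bij_betw_def)
  thus "f permutes set xs" using out by (rule bij_imp_permutes)
qed

abbreviation "G \<equiv> K15_minus_6K2"

lemma nb: "neighbours K15_V G v = set (filter (G v) [0..<15])"
  by (auto simp: neighbours_def K15_V_def K15_minus_6K2_def)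

lemma C1': "v < 15 \<Longrightarrow> distinct (Lr v) \<and> Lr v \<noteq> [] \<and> set (Lr v) = neighbours K15_V G v
   \<and> (\<forall>i < length (Lr v). rot0 v (Lr v ! i) = Lr v ! (Suc i mod length (Lr v)))"
  using C1 unfolding list_all_iff nb by auto

lemma Ldist: "v < 15 \<Longrightarrow> distinct (Lr v)"
  using C1' by blast

lemma C2': "v < 15 \<Longrightarrow> i < length (Lr v) \<Longrightarrow> rot0 (Lr v ! (Suc i mod length (Lr v))) v = Lr v ! i
    \<and> rot0 (Lr v ! i) (Lr v ! (Suc i mod length (Lr v))) = v"
  using C2 unfolding list_all_iff by auto

lemma Gb: "G a b \<Longrightarrow> b < 15 \<and> a < 15" by (simp add: K15_minus_6K2_def)

lemma SG: "simple_graph K15_V G"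
  by (auto simp: simple_graph_def K15_V_def K15_minus_6K2_def)

lemma RS: "rotation_system K15_V G rot0"
  unfolding rotation_system_def
proof
  fix v assume "v \<in> K15_V"
  hence v: "v < 15" by (simp add: K15_V_def)
  note c = C1'[OF v]
  have out: "rot0 v x = x" if "x \<notin> set (Lr v)" for x using that by (simp add: rot0_def nx_out)
  show "rot0 v permutes neighbours K15_V G v \<and>
     (\<forall>u\<in>neighbours K15_V G v. \<forall>w\<in>neighbours K15_V G v. \<exists>k. (rot0 v ^^ k) u = w)"
    using cyc_list[of "Lr v" "rot0 v"] c out by auto
qed

lemma deg: "v \<in> K15_V \<Longrightarrow> \<exists>w. G v w \<and> w \<noteq> u"
proof -
  assume "v \<in> K15_V"
  hence v: "v < 15" by (simp add: K15_V_def)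
  show ?thesis
  proof (cases "v \<noteq> 12 \<and> u \<noteq> 12")
    case True thus ?thesis using v by (intro exI[of _ 12]) (auto simp: K15_minus_6K2_def)
  next
    case F1: False show ?thesis
    proof (cases "v \<noteq> 13 \<and> u \<noteq> 13")
      case True thus ?thesis using v by (intro exI[of _ 13]) (auto simp: K15_minus_6K2_def)
    next
      case False thus ?thesis using v F1 by (intro exI[of _ 14]) (auto simp: K15_minus_6K2_def)
    qed
  qed
qed

lemma tri3: "d \<in> darts K15_V G \<Longrightarrow> (face_succ rot0 ^^ 3) d = d"
proof -
  assume "d \<in> darts K15_V G"
  then obtain u v where uv: "d = (u,v)" "v < 15" "G u v" by (auto simp: darts_def K15_V_def)
  have "u \<in> neighbours K15_V G v" using uv SG by (auto simp: neighbours_def simple_graph_def)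
  hence "u \<in> set (Lr v)" using C1'[OF uv(2)] by simp
  then obtain i where i: "i < length (Lr v)" "u = Lr v ! i" by (auto simp: in_set_conv_nth)
  define w where "w = Lr v ! (Suc i mod length (Lr v))"
  have r1: "rot0 v u = w" using C1'[OF uv(2)] i w_def by simp
  have r2: "rot0 w v = u" and r3: "rot0 u w = v" using C2'[OF uv(2) i(1)] i w_def by auto
  show ?thesis using uv r1 r2 r3 by (simp add: numeral_3_eq_3 face_succ_def)
qed

lemma card_darts: "card (darts K15_V G) = 198"
proof -
  have "darts K15_V G = Sigma {0..<15} (\<lambda>u. set (Lr u))"
    using C1' Gb by (auto simp: darts_def K15_V_def neighbours_def)
  moreover have "card (Sigma {0..<15} (\<lambda>u. set (Lr u))) = (\<Sum>u\<in>{0..<15::nat}. card (set (Lr u)))"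
    by (rule card_SigmaI) auto
  ultimately have "card (darts K15_V G) = (\<Sum>u\<in>{0..<15::nat}. card (set (Lr u)))" by simp
  also have "\<dots> = (\<Sum>u\<in>{0..<15::nat}. length (Lr u))"
  proof (rule sum.cong[OF refl])
    fix u :: nat assume "u \<in> {0..<15}" hence "distinct (Lr u)" using Ldist by simp
    thus "card (set (Lr u)) = length (Lr u)" by (rule distinct_card)
  qed
  also have "\<dots> = (\<Sum>u\<leftarrow>[0..<15]. length (Lr u))" by (simp add: interv_sum_list_conv_sum_set_nat)
  finally show ?thesis using C3 by simp
qed

lemma card_edges: "num_edges K15_V G = 99"
proof -
  let ?P = "Sigma {0..<15} (\<lambda>u. set (filter (\<lambda>v. u < v) (Lr u)))"
  have Gb: "G a b \<Longrightarrow> b < 15" for a b by (simp add: K15_minus_6K2_def)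
  have P: "?P = {(u,v). u < 15 \<and> G u v \<and> u < v}"
    using C1' Gb by (auto simp: neighbours_def K15_V_def)
  have eq: "{{u, v} | u v. u \<in> K15_V \<and> v \<in> K15_V \<and> G u v} = (\<lambda>(u,v). {u,v}) ` ?P"
  proof
    show "{{u, v} | u v. u \<in> K15_V \<and> v \<in> K15_V \<and> G u v} \<subseteq> (\<lambda>(u,v). {u,v}) ` ?P"
    proof
      fix e assume "e \<in> {{u, v} | u v. u \<in> K15_V \<and> v \<in> K15_V \<and> G u v}"
      then obtain u v where e: "e = {u,v}" "u < 15" "v < 15" "G u v" by (auto simp: K15_V_def)
      show "e \<in> (\<lambda>(u,v). {u,v}) ` ?P"
      proof (cases "u < v")
        case True thus ?thesis using e P by (auto intro!: image_eqI[of _ _ "(u,v)"])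
      next
        case False
        hence "v < u" using e by (auto simp: K15_minus_6K2_def)
        moreover have "G v u" using e by (auto simp: K15_minus_6K2_def)
        ultimately show ?thesis using e P by (auto intro!: image_eqI[of _ _ "(v,u)"])
      qed
    qed
    show "(\<lambda>(u,v). {u,v}) ` ?P \<subseteq> {{u, v} | u v. u \<in> K15_V \<and> v \<in> K15_V \<and> G u v}"
      using P by (auto simp: K15_V_def K15_minus_6K2_def)
  qed
  have inj: "inj_on (\<lambda>(u,v). {u,v}) ?P"
    unfolding P by (auto simp: inj_on_def doubleton_eq_iff)
  have "num_edges K15_V G = card ?P" unfolding num_edges_def eq using inj by (simp add: card_image)
  also have "\<dots> = (\<Sum>u\<in>{0..<15::nat}. card (set (filter (\<lambda>v. u < v) (Lr u))))"
    by (rule card_SigmaI) auto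
  also have "\<dots> = (\<Sum>u\<in>{0..<15::nat}. length (filter (\<lambda>v. u < v) (Lr u)))"
  proof (rule sum.cong[OF refl])
    fix u :: nat assume "u \<in> {0..<15}" hence "distinct (Lr u)" using Ldist by simp
    thus "card (set (filter (\<lambda>v. u < v) (Lr u))) = length (filter (\<lambda>v. u < v) (Lr u))"
      by (intro distinct_card distinct_filter)
  qed
  also have "\<dots> = (\<Sum>u\<leftarrow>[0..<15]. length (filter (\<lambda>v. u < v) (Lr u)))"
    by (simp add: interv_sum_list_conv_sum_set_nat)
  finally show ?thesis using C3 by simp
qed

theorem mainTheorem5:
  shows "(\<exists>rot. rotation_system K15_V K15_minus_6K2 rot \<and> triangular K15_V K15_minus_6K2 rot)
         \<and> orientable_genus K15_V K15_minus_6K2 = 10"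
proof -
  have T: "triangular K15_V G rot0" "3 * card (faces K15_V G rot0) = card (darts K15_V G)"
    using faces_tri[OF SG RS deg tri3] by auto
  have cV: "card K15_V = 15" by (simp add: K15_V_def)
  have g0: "embedding_genus K15_V G rot0 = int 10"
    using T(2) by (simp add: embedding_genus_def cV card_edges card_darts)
  have lb: "10 \<le> g" if h: "\<exists>rot. rotation_system K15_V G rot \<and> embedding_genus K15_V G rot = int g" for g
  proof -
    obtain rot where r: "rotation_system K15_V G rot" "embedding_genus K15_V G rot = int g" using h by blast
    have "3 * card (faces K15_V G rot) \<le> 198" using faces_bound[OF SG r(1) deg] card_darts by simp
    hence "int 10 \<le> embedding_genus K15_V G rot"
      by (simp add: embedding_genus_def cV card_edges)
    thus ?thesis using r(2) by simp
  qed
  have "orientable_genus K15_V G = 10"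
    unfolding orientable_genus_def
    by (rule Least_equality) (use RS g0 lb in auto)
  thus ?thesis using RS T(1) by blast
qed


end
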